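(* Let $y\in\mathbb{R}^{k+1}$, $y\neq0$, let $T$ be any point on the line through the origin $O$ and $y$ with $T\neq y$, and let $\delta=|T-y|$. Then $$\omega(x,y)=\frac{|T|}{\delta}\quad\text{for all } x \text{ with } |x-T|=\delta,\ x\neq y .$$
   Context: For $x\neq y$ in $\mathbb{R}^{k+1}$, the spherical ratio of two points is $\omega(x,y)=\left|\dfrac{|x|^2-|y|^2}{|x-y|^2}\right|$; $|T|=|OT|$ is the distance from the origin to $T$. *)

theory Defs
  imports "HOL-Analysis.Analysis"
begin

definition spherical_ratio :: "'a::real_normed_vector \<Rightarrow> 'a \<Rightarrow> real" where
  "spherical_ratio x y = \<bar>(norm x ^ 2 - norm y ^ 2) / (norm (x - y) ^ 2)\<bar>"

end

theory Submission
  imports Defs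
begin

theorem lemma1:
  fixes y T x :: "'a::euclidean_space" and t :: real
  assumes "y \<noteq> 0"
    and "T = t *\<^sub>R y"
    and "T \<noteq> y"
    and "norm (x - T) = norm (T - y)"
    and "x \<noteq> y"
  shows "spherical_ratio x y = norm T / norm (T - y)"
proof -
  define a where "a = x \<bullet> y"
  define b where "b = y \<bullet> y"
  define c where "c = x \<bullet> x"
  have b0: "b > 0" using assms(1) by (simp add: b_def)
  have t1: "t \<noteq> 1" using assms(2,3) by auto
  have "norm (x - T)^2 = norm (T - y)^2" using assms(4) by simp
  hence e: "c - 2*t*a + t^2*b = (t-1)^2*b"
    unfolding power2_norm_eq_inner assms(2) a_def b_def c_def
    by (simp add: inner_diff_left inner_diff_right inner_commute algebra_simps power2_eq_square)
  have n1: "norm x ^2 - norm y^2 = 2*t*(a - b)"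
    using e unfolding power2_norm_eq_inner a_def b_def c_def by (simp add: algebra_simps power2_eq_square)
  have n2: "norm (x - y)^2 = 2*(t-1)*(a-b)"
    using e unfolding power2_norm_eq_inner a_def b_def c_def
    by (simp add: inner_diff_left inner_diff_right inner_commute algebra_simps power2_eq_square)
  have "norm (x-y)^2 \<noteq> 0" using assms(5) by simp
  hence ab: "a - b \<noteq> 0" using n2 by auto
  have "spherical_ratio x y = \<bar>t / (t-1)\<bar>"
  proof -
    have t1': "t - 1 \<noteq> 0" using t1 by simp
    have h: "(t/(t-1)) * (2*(t-1)*(a-b)) = 2*t*(a-b)"
    proof -
      have "(t/(t-1)) * (2*(t-1)*(a-b)) = (t/(t-1)*(t-1)) * (2*(a-b))" by (simp only: ac_simps)
      also have "t/(t-1)*(t-1) = t" using t1' by simp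
      finally show ?thesis by simp
    qed
    have nz: "2*(t-1)*(a-b) \<noteq> 0" using t1' ab by simp
    have "2*t*(a-b) / (2*(t-1)*(a-b)) = t/(t-1)" using h nz by (metis nonzero_mult_div_cancel_right)
    thus ?thesis unfolding spherical_ratio_def n1 n2 by simp
  qed
  also have "\<dots> = norm T / norm (T - y)"
  proof -
    have "T - y = (t - 1) *\<^sub>R y" using assms(2) by (simp add: algebra_simps)
    thus ?thesis using assms(1,2) by (simp add: abs_divide)
  qed
  finally show ?thesis .
qed

end
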